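(* Let $\langle B,\wedge,{}'\rangle$ be an algebra with $\wedge$ binary and ${}'$ unary satisfying $x\wedge(y\wedge z)\approx z\wedge(y\wedge x)$, $x''\approx x$, and $x'\approx (x\wedge y)'\wedge(x\wedge y')'$. Then $x'\wedge y'=y'\wedge x'$ for all $x,y\in B$. *)

theory Defs
  imports Main
begin

end

theory Submission
  imports Defs
begin

theorem lemma7p6:
  fixes meet :: "'a \<Rightarrow> 'a \<Rightarrow> 'a" and c :: "'a \<Rightarrow> 'a"
  assumes A1: "\<And>x y z. meet x (meet y z) = meet z (meet y x)"
    and A2: "\<And>x. c (c x) = x"
    and A3: "\<And>x y. c x = meet (c (meet x y)) (c (meet x (c y)))"
  shows "\<forall>x y. meet (c x) (c y) = meet (c y) (c x)"
proof -
  have c6: "meet (c (meet x1 (c x2))) (meet (c (meet x1 x2)) x3) = meet x3 (c x1)" for x1 x2 x3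
    by (metis A1 A3)
  have c8: "meet (meet (c (meet x1 x2)) x3) (c x1) = meet (c x1) (meet x3 (c (meet x1 x2)))" for x1 x2 x3
    by (metis c6 A2 A1)
  have c9: "meet (c (meet (c x1) (meet x2 (c (meet x2 x1))))) x2 = meet x2 x1" for x1 x2
    by (metis A3 A2 A1)
  have c10: "meet x1 (c (meet (c x2) (meet x1 (c (meet x1 x2))))) = meet x1 x2" for x1 x2
    by (metis A3 A2 A1)
  have c11: "meet (meet x1 x2) x2 = meet x2 (meet x1 x2)" for x1 x2
    by (metis c8 c9 A2 c10)
  have c12: "meet x1 (meet x2 (meet x3 x2)) = meet x2 (meet (meet x3 x2) x1)" for x1 x2 x3
    by (metis A1 c11)
  have c13: "meet (meet x1 x2) (meet x2 x3) = meet x2 (meet (meet x1 x2) x3)" for x1 x2 x3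
    by (metis A1 c12)
  have c14: "meet (c (meet x1 (c x2))) (c (meet x1 x2)) = c x1" for x1 x2
    by (metis A3 A2)
  have c15: "meet (c (meet x1 x2)) (meet (c x1) x3) = meet (c x1) (meet (c (meet x1 x2)) x3)" for x1 x2 x3
    by (metis c13 c14)
  have c16: "meet (meet x1 x2) x1 = meet x1 (meet x1 x2)" for x1 x2
    by (metis c11 c9)
  have c17: "meet (c x1) (meet x2 (c x1)) = meet (c x1) (meet (c x1) x2)" for x1 x2
    by (metis c6 c15 c16)
  have c18: "meet x1 (meet x2 x1) = meet x1 (meet x1 x2)" for x1 x2
    by (metis c17 A2)
  have c19: "meet (meet x1 (c (meet x2 x3))) (c x2) = meet (c x2) (meet x1 (c (meet x2 x3)))" for x1 x2 x3
    by (metis c6 c18 c8)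
  have c20: "meet (c (meet x1 (c (meet x2 x3)))) (c (meet x3 (meet x2 x1))) = c x1" for x1 x2 x3
    by (metis c14 A1)
  have c21: "meet (c x1) (c x2) = meet (c x2) (c x1)" for x1 x2
    by (metis c19 c20)
  show ?thesis using c21 by blast
qed

end
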